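(* For every complex $s$ with $\Re(s)>3$, \[\sum_{k=1}^\infty (-1)^{k-1}k^2\,\zeta(s,k)=\tfrac{1}{2}\Big\{(1-2^{2-s}) \zeta(s-1)+(1-2^{3-s}) \zeta(s-2)\Big\}.\]
   Context: $\zeta(s,\alpha)=\sum_{n=0}^\infty (n+\alpha)^{-s}$ denotes the Hurwitz zeta function ($\Re(s)>1$, $\alpha>0$), and $\zeta(s)=\zeta(s,1)$ is the Riemann zeta function. *)

theory Defs
  imports "HOL-Analysis.Analysis"
begin

text \<open>Hurwitz zeta function, defined by its series (meaningful for Re s > 1, a > 0).\<close>
definition hurwitz_zeta :: "complex \<Rightarrow> real \<Rightarrow> complex" where
  "hurwitz_zeta s a = (\<Sum>n. (complex_of_real (real n + a)) powr (- s))"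

definition riemann_zeta :: "complex \<Rightarrow> complex" where
  "riemann_zeta s = hurwitz_zeta s 1"

end

theory Submission
  imports Defs
begin

definition P :: "complex \<Rightarrow> nat \<Rightarrow> complex" where
  "P z m = (of_nat (Suc m) :: complex) powr (- z)"

lemma norm_P: "norm (P z m) = real (Suc m) powr (- Re z)"
proof -
  have "norm (P z m) = Re (of_nat (Suc m)) powr Re (-z)"
    unfolding P_def by (rule norm_powr_real_powr) auto
  thus ?thesis by simp
qed

lemma summable_real_shift:
  assumes "a < -1" shows "summable (\<lambda>m. real (Suc m + k) powr a)"
proof -
  have "summable (\<lambda>n. real n powr a)" using assms summable_real_powr_iff by blast
  from summable_ignore_initial_segment[OF this, of "Suc k"]
  show ?thesis by (simp add: add.commute)
qed

lemma summable_norm_P: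
  assumes "Re z > 1" shows "summable (\<lambda>m. norm (P z (m + k)))"
  using summable_real_shift[of "- Re z" k] assms by (simp add: norm_P)

lemma summable_P:
  assumes "Re z > 1" shows "summable (\<lambda>m. P z (m + k))"
  by (rule summable_norm_cancel[OF summable_norm_P[OF assms]])

lemma hz_eq: "hurwitz_zeta s (real (Suc k)) = (\<Sum>n. P s (n + k))"
proof -
  have "\<And>n. complex_of_real (real n + real (Suc k)) = of_nat (Suc (n + k))" by simp
  thus ?thesis unfolding hurwitz_zeta_def P_def by presburger
qed

lemma rz_eq: "riemann_zeta s = (\<Sum>n. P s n)"
  using hz_eq[of s 0] by (simp add: riemann_zeta_def)

lemma Z_shift:
  assumes "Re s > 1"
  shows "(\<Sum>n. P s (n + k)) = P s k + (\<Sum>n. P s (n + Suc k))"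
  using suminf_split_head[OF summable_P[OF assms, of k]] by simp

definition c :: "nat \<Rightarrow> complex" where
  "c j = (\<Sum>i<j. (-1)^i * (of_nat (Suc i))^2)"

lemma c_closed: "c j = (-1)^(Suc j) * of_nat j * of_nat (Suc j) / 2"
proof (induction j)
  case 0 thus ?case by (simp add: c_def)
next
  case (Suc j)
  have "c (Suc j) = c j + (-1)^j * (of_nat (Suc j))^2" by (simp add: c_def)
  also have "\<dots> = (-1)^(Suc (Suc j)) * of_nat (Suc j) * of_nat (Suc (Suc j)) / 2"
    by (simp only: Suc.IH) (simp add: field_simps power2_eq_square)
  finally show ?case .
qed

lemma norm_c: "norm (c K) \<le> real (Suc K) ^ 2"
proof -
  have "norm (c K) = real K * real (Suc K) / 2"
    by (simp add: c_closed norm_mult norm_divide norm_power norm_of_nat del: of_nat_Suc)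
  also have "\<dots> \<le> real (Suc K) ^ 2" by (simp add: power2_eq_square field_simps mult_mono)
  finally show ?thesis .
qed

lemma partial:
  assumes "Re s > 1"
  shows "(\<Sum>k<K. (-1)^k * (of_nat (Suc k))^2 * (\<Sum>n. P s (n + k)))
      = (\<Sum>m<K. c (Suc m) * P s m) + c K * (\<Sum>n. P s (n + K))"
proof (induction K)
  case 0 thus ?case by (simp add: c_def)
next
  case (Suc K)
  have cs: "c (Suc K) = c K + (-1)^K * (of_nat (Suc K))^2" by (simp add: c_def)
  show ?case using Suc Z_shift[OF assms, of K] cs by (simp add: algebra_simps)
qed

lemma term_eq:
  "c (Suc m) * P s m = (1/2) * ((-1)^m * P (s - 1) m + (-1)^m * P (s - 2) m)"
proof -
  define w :: complex where "w = of_nat (Suc m)"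
  have w0: "w \<noteq> 0" unfolding w_def by (rule of_nat_neq_0)
  have a: "P (s - 1) m = w * P s m"
    unfolding P_def w_def[symmetric] using powr_add[of w 1 "-s"] by simp
  have b: "P (s - 2) m = w^2 * P s m"
  proof -
    have "P (s - 2) m = w powr (2 + - s)" unfolding P_def w_def[symmetric] by simp
    also have "\<dots> = w powr 2 * w powr (-s)" by (rule powr_add)
    finally show ?thesis using w0 by (simp add: P_def w_def del: of_nat_Suc)
  qed
  have "c (Suc m) = (-1)^m * (w + w^2) / 2"
    by (simp add: c_closed w_def field_simps power2_eq_square)
  hence "c (Suc m) * P s m = (-1)^m * (w + w^2) / 2 * P s m" by simp
  also have "\<dots> = (1/2) * ((-1)^m * (w * P s m) + (-1)^m * (w^2 * P s m))"
    by (simp add: algebra_simps)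
  finally show ?thesis by (simp add: a b)
qed

lemma eta:
  assumes z: "Re z > 1"
  shows "(\<lambda>m. (-1)^m * P z m) sums ((1 - 2 powr (1 - z)) * (\<Sum>n. P z n))"
proof -
  have sP: "summable (P z)" using summable_P[OF z, of 0] by simp
  have sA: "summable (\<lambda>m. (-1)^m * P z m)"
    by (rule summable_norm_cancel) (use summable_norm_P[OF z, of 0] in \<open>simp add: norm_mult norm_power\<close>)
  define \<zeta> where "\<zeta> = (\<Sum>n. P z n)"
  define \<eta> where "\<eta> = (\<Sum>m. (-1)^m * P z m)"
  define g where "g m = P z m - (-1)^m * P z m" for m
  have "g sums (\<zeta> - \<eta>)" unfolding g_def \<zeta>_def \<eta>_def
    by (intro sums_diff summable_sums sP sA)
  from sums_group[OF this, of 2]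
  have g1: "(\<lambda>n. sum g {n*2..<n*2+2}) sums (\<zeta> - \<eta>)" by simp
  have Podd: "P z (n*2+1) = 2 powr (-z) * P z n" for n
  proof -
    have "(of_nat (Suc (n*2+1)) :: complex) = of_real 2 * of_real (real (Suc n))" by simp
    hence "P z (n*2+1) = (of_real 2 * of_real (real (Suc n))) powr (-z)" unfolding P_def by metis
    also have "\<dots> = of_real 2 powr (-z) * of_real (real (Suc n)) powr (-z)"
      by (rule powr_times_real) auto
    finally show ?thesis by (simp add: P_def)
  qed
  have geq: "sum g {n*2..<n*2+2} = 2 * 2 powr (-z) * P z n" for n
  proof -
    have m1: "(-1::complex)^(n*2) = 1" by (simp add: mult.commute[of n] power_mult)
    have m2: "(-1::complex)^(n*2+1) = -1" using m1 by simp
    have "sum g {n*2..<n*2+2} = g (n*2) + g (n*2+1)" by (simp add: numeral_2_eq_2)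
    also have "\<dots> = 2 * P z (n*2+1)" unfolding g_def m1 m2 by simp
    finally show ?thesis using Podd[of n] by simp
  qed
  have g2: "(\<lambda>n. sum g {n*2..<n*2+2}) sums (2 * 2 powr (-z) * \<zeta>)"
    unfolding geq \<zeta>_def by (intro sums_mult summable_sums sP)
  have "\<zeta> - \<eta> = 2 * 2 powr (-z) * \<zeta>" using sums_unique2[OF g1 g2] .
  moreover have "(2::complex) powr (1 - z) = 2 * 2 powr (-z)"
    using powr_add[of "2::complex" 1 "-z"] by simp
  ultimately have "\<eta> = (1 - 2 powr (1 - z)) * \<zeta>" by (simp add: algebra_simps)
  with sA show ?thesis unfolding \<eta>_def \<zeta>_def using summable_sums by metis
qed

lemma pw_bound:
  assumes "real K + 1 \<le> x"
  shows "real (Suc K)^2 * x powr (-a) \<le> x powr (2 - a)"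
proof -
  have x0: "x > 0" using assms by linarith
  have "x powr (2 - a) = x powr 2 * x powr (-a)" using powr_add[of x 2 "-a"] by simp
  also have "x powr 2 = x^2" using x0 by (simp add: powr_numeral)
  finally have e: "x powr (2 - a) = x^2 * x powr (-a)" .
  have "real (Suc K)^2 \<le> x^2" using assms by (intro power_mono) auto
  thus ?thesis unfolding e by (intro mult_right_mono) auto
qed

theorem mainTheorem9:
  fixes s :: complex
  assumes "Re s > 3"
  shows "(\<lambda>k. (-1) ^ k * (of_nat (Suc k))^2 * hurwitz_zeta s (real (Suc k))) sums
           ((1/2) * ((1 - 2 powr (2 - s)) * riemann_zeta (s - 1)
                   + (1 - 2 powr (3 - s)) * riemann_zeta (s - 2)))"
proof -
  have s1: "Re s > 1" and s11: "Re (s - 1) > 1" and s21: "Re (s - 2) > 1" using assms by auto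
  define Z where "Z k = (\<Sum>n. P s (n + k))" for k
  define T where "T = (1/2) * ((1 - 2 powr (2 - s)) * riemann_zeta (s - 1)
                   + (1 - 2 powr (3 - s)) * riemann_zeta (s - 2))"
  have e1: "(\<lambda>m. (-1)^m * P (s-1) m) sums ((1 - 2 powr (2 - s)) * riemann_zeta (s - 1))"
  proof -
    have "1 - (s - 1) = 2 - s" by simp
    thus ?thesis using eta[OF s11] by (simp add: rz_eq)
  qed
  have e2: "(\<lambda>m. (-1)^m * P (s-2) m) sums ((1 - 2 powr (3 - s)) * riemann_zeta (s - 2))"
  proof -
    have "1 - (s - 2) = 3 - s" by simp
    thus ?thesis using eta[OF s21] by (simp add: rz_eq)
  qed
  have A: "(\<lambda>m. c (Suc m) * P s m) sums T"
    unfolding term_eq T_def by (intro sums_mult sums_add e1 e2)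
  hence A': "(\<lambda>K. \<Sum>m<K. c (Suc m) * P s m) \<longlonglongrightarrow> T" by (simp add: sums_def)
  define R where "R m = real (Suc m) powr (2 - Re s)" for m
  have sR: "summable R" unfolding R_def using summable_real_shift[of "2 - Re s" 0] assms by simp
  have sRn: "summable (\<lambda>n. R (n + K))" for K using summable_ignore_initial_segment[OF sR] .
  have gt: "(\<lambda>K. \<Sum>n. R (n + K)) \<longlonglongrightarrow> 0"
  proof -
    have "(\<lambda>K. suminf R - (\<Sum>i<K. R i)) \<longlonglongrightarrow> suminf R - suminf R"
      by (intro tendsto_diff tendsto_const summable_LIMSEQ sR)
    thus ?thesis by (simp add: suminf_minus_initial_segment[OF sR])
  qed
  have bnd: "norm (c K * Z K) \<le> (\<Sum>n. R (n + K))" for K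
  proof -
    have sN: "summable (\<lambda>n. norm (P s (n + K)))" by (rule summable_norm_P[OF s1])
    have "norm (c K * Z K) \<le> real (Suc K)^2 * norm (Z K)"
      unfolding norm_mult by (intro mult_right_mono norm_c) auto
    also have "norm (Z K) \<le> (\<Sum>n. norm (P s (n + K)))"
      unfolding Z_def by (rule summable_norm[OF sN])
    hence "real (Suc K)^2 * norm (Z K) \<le> real (Suc K)^2 * (\<Sum>n. norm (P s (n + K)))"
      by (intro mult_left_mono) auto
    also have "\<dots> = (\<Sum>n. real (Suc K)^2 * norm (P s (n + K)))"
      by (rule suminf_mult[OF sN, symmetric])
    also have "\<dots> \<le> (\<Sum>n. R (n + K))"
    proof (rule suminf_le)
      fix n show "real (Suc K)^2 * norm (P s (n + K)) \<le> R (n + K)"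
        unfolding norm_P R_def by (rule pw_bound) auto
    qed (use sN sRn in \<open>auto intro: summable_mult\<close>)
    finally show ?thesis .
  qed
  have B: "(\<lambda>K. c K * Z K) \<longlonglongrightarrow> 0"
    by (rule Lim_null_comparison[OF _ gt]) (use bnd in auto)
  have "(\<lambda>K. (\<Sum>m<K. c (Suc m) * P s m) + c K * Z K) \<longlonglongrightarrow> T + 0"
    by (intro tendsto_add A' B)
  moreover have "(\<Sum>k<K. (-1) ^ k * (of_nat (Suc k))^2 * hurwitz_zeta s (real (Suc k)))
      = (\<Sum>m<K. c (Suc m) * P s m) + c K * Z K" for K
    unfolding hz_eq Z_def by (rule partial[OF s1])
  ultimately show ?thesis unfolding sums_def T_def by simp
qed

end
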